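(* Let $r>1$ and integer $K\ge2$. Let $\gamma^*(r,K,1)$ be the supremum of $\sum_{i=1}^{K-1}\frac{p^i}{\sum_{j=i}^Kp^j}$ over all $p=(p^1,\dots,p^K)$ with $p^K=1/r$, $\sum_ip^i=1$, $p^i>0$. Then $$\gamma^*(r,K,1)=(K-1)\left(1-r^{-\frac{1}{K-1}}\right),$$ and $\eta(r,K,1)=\gamma^*(r,K,1)/(1+\gamma^*(r,K,1))$.
   Context: Single item auction with one buyer whose value takes values $0<x^1<\dots<x^K$ with probabilities $p^i>0$, $\sum_ip^i=1$. Let $t(x,p)=\max\{i: i\in\arg\max_{1\le k\le K}x^k\sum_{j=k}^Kp^j\}$ (the index of the optimal posted price). The efficiency loss ratio of the revenue-optimal auction is $\mathrm{ELR}_1(x,p)=\sum_{i=1}^{t(x,p)-1}p^ix^i/\sum_{i=1}^Kp^ix^i$. $\eta(r,K,1)$ is the supremum of $\mathrm{ELR}_1(x,p)$ over all such $p$ and all $x$ with $0<x^1<\dots<x^K\le rx^1$. *)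

theory Defs
  imports Complex_Main
begin

text \<open>Values x^1..x^K and probabilities p^1..p^K are functions on nat, indices 1..K.\<close>

definition rev_obj :: "nat \<Rightarrow> (nat \<Rightarrow> real) \<Rightarrow> (nat \<Rightarrow> real) \<Rightarrow> nat \<Rightarrow> real" where
  "rev_obj K x p k = x k * (\<Sum>j=k..K. p j)"

definition opt_index :: "nat \<Rightarrow> (nat \<Rightarrow> real) \<Rightarrow> (nat \<Rightarrow> real) \<Rightarrow> nat" where
  "opt_index K x p = Max {i \<in> {1..K}. \<forall>k\<in>{1..K}. rev_obj K x p k \<le> rev_obj K x p i}"

definition ELR1 :: "nat \<Rightarrow> (nat \<Rightarrow> real) \<Rightarrow> (nat \<Rightarrow> real) \<Rightarrow> real" where
  "ELR1 K x p = (\<Sum>i=1..opt_index K x p - 1. p i * x i) / (\<Sum>i=1..K. p i * x i)"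

definition valid_prob :: "nat \<Rightarrow> (nat \<Rightarrow> real) \<Rightarrow> bool" where
  "valid_prob K p \<longleftrightarrow> (\<forall>i\<in>{1..K}. p i > 0) \<and> (\<Sum>i=1..K. p i) = 1"

definition valid_vals :: "real \<Rightarrow> nat \<Rightarrow> (nat \<Rightarrow> real) \<Rightarrow> bool" where
  "valid_vals r K x \<longleftrightarrow> 0 < x 1 \<and> (\<forall>i\<in>{1..K}. \<forall>j\<in>{1..K}. i < j \<longrightarrow> x i < x j) \<and> x K \<le> r * x 1"

definition eta :: "real \<Rightarrow> nat \<Rightarrow> real" where
  "eta r K = Sup {ELR1 K x p | x p. valid_vals r K x \<and> valid_prob K p}"

definition gamma_star :: "real \<Rightarrow> nat \<Rightarrow> real" where
  "gamma_star r K = Sup {(\<Sum>i=1..K-1. p i / (\<Sum>j=i..K. p j)) | p.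
      valid_prob K p \<and> p K = 1 / r}"

end

theory Submission
  imports Defs
begin

lemma tangent_ln:
  fixes c t :: real
  assumes "0 < c" "0 < t"
  shows "c * (1 + ln t - ln c) \<le> t"
proof -
  have "ln (t / c) \<le> t / c - 1" using assms by (intro ln_le_minus_one) auto
  hence "ln t - ln c \<le> t / c - 1" using assms by (simp add: ln_div)
  hence "c * (ln t - ln c) \<le> c * (t / c - 1)" using assms by (intro mult_left_mono) auto
  thus ?thesis using assms by (simp add: algebra_simps)
qed

lemma keyA:
  fixes S :: "nat \<Rightarrow> real" and m n :: nat and q :: real
  assumes pos: "\<And>i. 1 \<le> i \<Longrightarrow> i \<le> m + 1 \<Longrightarrow> S i > 0"
    and mn: "m \<le> n" and q0: "0 < q" and q1: "q < 1"
    and lnb: "ln (S (m + 1)) - ln (S 1) \<ge> real n * ln q"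
  shows "(\<Sum>i=1..m. 1 - S (Suc i) / S i) \<le> real n * (1 - q)"
proof -
  have step: "1 - S (Suc i) / S i \<le> (1 - q) + q * ln q - q * (ln (S (Suc i)) - ln (S i))"
    if "i \<in> {1..m}" for i
  proof -
    have a: "S i > 0" "S (Suc i) > 0" using that pos by auto
    have "q * (1 + ln (S (Suc i) / S i) - ln q) \<le> S (Suc i) / S i"
      using a q0 by (intro tangent_ln) auto
    moreover have "ln (S (Suc i) / S i) = ln (S (Suc i)) - ln (S i)" using a by (simp add: ln_div)
    ultimately show ?thesis by (simp add: algebra_simps)
  qed
  have "(\<Sum>i=1..m. 1 - S (Suc i) / S i) \<le>
        (\<Sum>i=1..m. (1 - q) + q * ln q - q * (ln (S (Suc i)) - ln (S i)))"
    using step by (rule sum_mono)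
  also have "\<dots> = real m * ((1 - q) + q * ln q) - q * (\<Sum>i=1..m. ln (S (Suc i)) - ln (S i))"
    by (simp add: sum.distrib sum_subtractf sum_distrib_left[symmetric] right_diff_distrib[symmetric])
  also have "(\<Sum>i=1..m. ln (S (Suc i)) - ln (S i)) = ln (S (Suc m)) - ln (S 1)"
    by (rule sum_Suc_diff) simp
  finally have A: "(\<Sum>i=1..m. 1 - S (Suc i) / S i) \<le>
      real m * ((1 - q) + q * ln q) - q * (ln (S (Suc m)) - ln (S 1))" .
  have B: "q * (real n * ln q) \<le> q * (ln (S (Suc m)) - ln (S 1))"
    using lnb q0 by (intro mult_left_mono) auto
  have "ln (1 / q) \<le> 1 / q - 1" using q0 by (intro ln_le_minus_one) auto
  hence "- ln q \<le> 1 / q - 1" using q0 by (simp add: ln_div)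
  hence "q * (- ln q) \<le> q * (1 / q - 1)" using q0 by (intro mult_left_mono) auto
  hence C: "q * (- ln q) \<le> 1 - q" using q0 by (simp add: algebra_simps)
  have D: "(real n - real m) * (q * (- ln q)) \<le> (real n - real m) * (1 - q)"
    using C mn by (intro mult_left_mono) auto
  show ?thesis using A B D by (simp add: algebra_simps)
qed



lemma qfacts:
  fixes r :: real and K :: nat
  assumes r: "r > 1" and K: "K \<ge> 2"
  defines "q \<equiv> r powr (- 1 / real (K - 1))"
  shows "0 < q" "q < 1" "q ^ (K - 1) = 1 / r" "real (K - 1) * ln q = - ln r"
proof -
  have K1: "real (K - 1) > 0" using K by simp
  show "0 < q" using r by (simp add: q_def)
  show "q < 1" unfolding q_def using r K1
    by (intro powr_less_one) (auto simp: divide_neg_pos)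
  have "q ^ (K - 1) = q powr real (K - 1)" using r by (simp add: q_def powr_realpow)
  also have "\<dots> = r powr (- 1 / real (K - 1) * real (K - 1))" by (simp add: q_def powr_powr)
  also have "\<dots> = r powr (-1)" using K1 by simp
  also have "\<dots> = 1 / r" using r by (simp add: powr_minus_divide)
  finally show "q ^ (K - 1) = 1 / r" .
  have "ln q = (- 1 / real (K - 1)) * ln r" using r by (simp add: q_def ln_powr)
  thus "real (K - 1) * ln q = - ln r" using K1 by simp
qed

lemma S_pos:
  assumes "valid_prob K p" "1 \<le> i" "i \<le> K"
  shows "(\<Sum>j=i..K. p j) > 0"
  using assms unfolding valid_prob_def by (intro sum_pos) auto

lemma S_split:
  assumes "i < K"
  shows "(\<Sum>j=i..K. p j) = p i + (\<Sum>j=Suc i..K. p j)"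
  using assms by (simp add: sum.atLeast_Suc_atMost)

lemma ratio_eq:
  assumes "valid_prob K p" "1 \<le> i" "i < K"
  shows "p i / (\<Sum>j=i..K. p j) = 1 - (\<Sum>j=Suc i..K. p j) / (\<Sum>j=i..K. p j)"
proof -
  have "(\<Sum>j=i..K. p j) > 0" using assms by (intro S_pos) auto
  thus ?thesis using S_split[OF assms(3), of p] by (simp add: field_simps)
qed

lemma main_bound:
  fixes r :: real and K t :: nat and p :: "nat \<Rightarrow> real"
  assumes r: "r > 1" and K: "K \<ge> 2" and vp: "valid_prob K p"
    and t: "1 \<le> t" "t \<le> K" and St: "(\<Sum>j=t..K. p j) \<ge> 1 / r"
  shows "(\<Sum>i=1..t-1. p i / (\<Sum>j=i..K. p j))
     \<le> real (K - 1) * (1 - r powr (- 1 / real (K - 1)))"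
proof -
  define q where "q = r powr (- 1 / real (K - 1))"
  note qf = qfacts[OF r K, folded q_def]
  define S where "S i = (\<Sum>j=i..K. p j)" for i
  have "(\<Sum>i=1..t-1. p i / (\<Sum>j=i..K. p j)) = (\<Sum>i=1..t-1. 1 - S (Suc i) / S i)"
    using t by (intro sum.cong) (auto simp: S_def intro!: ratio_eq[OF vp])
  also have "\<dots> \<le> real (K - 1) * (1 - q)"
  proof (rule keyA)
    show "\<And>i. 1 \<le> i \<Longrightarrow> i \<le> t - 1 + 1 \<Longrightarrow> S i > 0"
      using t unfolding S_def by (intro S_pos[OF vp]) auto
    show "t - 1 \<le> K - 1" using t by simp
    show "0 < q" "q < 1" using qf by auto
    have S1: "S 1 = 1" using vp by (simp add: S_def valid_prob_def)
    have "S t > 0" using t unfolding S_def by (intro S_pos[OF vp]) auto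
    hence "ln (S t) \<ge> ln (1 / r)" using St r by (simp add: S_def)
    hence "ln (S t) \<ge> - ln r" using r by (simp add: ln_div)
    thus "ln (S (t - 1 + 1)) - ln (S 1) \<ge> real (K - 1) * ln q"
      using t S1 qf by simp
  qed
  finally show ?thesis by (simp add: q_def)
qed


lemma eta_ub:
  fixes r :: real and K :: nat
  assumes r: "r > 1" and K: "K \<ge> 2" and vv: "valid_vals r K x" and vp: "valid_prob K p"
  defines "G \<equiv> real (K - 1) * (1 - r powr (- 1 / real (K - 1)))"
  shows "ELR1 K x p \<le> G / (1 + G)"
proof -
  define q where "q = r powr (- 1 / real (K - 1))"
  note qf = qfacts[OF r K, folded q_def]
  have G0: "G \<ge> 0" using qf K unfolding G_def q_def[symmetric] by simp
  have x1: "x 1 > 0" and xmono: "\<And>i j. i \<in> {1..K} \<Longrightarrow> j \<in> {1..K} \<Longrightarrow> i < j \<Longrightarrow> x i < x j"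
    and xK: "x K \<le> r * x 1" using vv unfolding valid_vals_def by auto
  have xle: "x i \<le> x j" if "i \<in> {1..K}" "j \<in> {1..K}" "i \<le> j" for i j
    using xmono[OF that(1,2)] that(3) by (cases "i = j") auto
  have xpos: "x i > 0" if "i \<in> {1..K}" for i
    using xle[of 1 i] that x1 K by auto
  have pp: "p i > 0" if "i \<in> {1..K}" for i using vp that unfolding valid_prob_def by auto
  define S where "S i = (\<Sum>j=i..K. p j)" for i
  define M where "M = {i \<in> {1..K}. \<forall>k\<in>{1..K}. rev_obj K x p k \<le> rev_obj K x p i}"
  define t where "t = opt_index K x p"
  have tM: "t = Max M" by (simp add: t_def M_def opt_index_def)
  have fin: "finite M" by (simp add: M_def)
  have ne: "M \<noteq> {}"
  proof -
    let ?f = "rev_obj K x p"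
    have "Max (?f ` {1..K}) \<in> ?f ` {1..K}" using K by (intro Max_in) auto
    then obtain i where i: "i \<in> {1..K}" "?f i = Max (?f ` {1..K})" by auto
    have "\<forall>k\<in>{1..K}. ?f k \<le> ?f i" using i by auto
    thus ?thesis using i by (auto simp: M_def)
  qed
  have "t \<in> M" using fin ne tM by (simp add: Max_in)
  hence t1: "1 \<le> t" and tK: "t \<le> K" and topt: "\<And>k. k \<in> {1..K} \<Longrightarrow> x k * S k \<le> x t * S t"
    by (auto simp: M_def rev_obj_def S_def)
  define R where "R = x t * S t"
  have St: "S t > 0" using t1 tK unfolding S_def by (intro S_pos[OF vp]) auto
  have R0: "R > 0" using St xpos[of t] t1 tK by (simp add: R_def)
  have "x 1 * S 1 \<le> R" using topt[of 1] K by (simp add: R_def)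
  moreover have "S 1 = 1" using vp by (simp add: S_def valid_prob_def)
  ultimately have "x 1 \<le> x t * S t" by (simp add: R_def)
  moreover have "x t \<le> r * x 1" using xle[of t K] t1 tK xK by auto
  ultimately have "x 1 \<le> r * x 1 * S t" using St by (smt (verit) mult_right_mono)
  hence "1 \<le> r * S t" using x1 by (simp add: mult.assoc)
  hence Str: "S t \<ge> 1 / r" using r by (simp add: field_simps)
  define L where "L = (\<Sum>i=1..t-1. p i * x i)"
  have "L \<le> (\<Sum>i=1..t-1. R * (p i / S i))"
    unfolding L_def
  proof (rule sum_mono)
    fix i assume i: "i \<in> {1..t-1}"
    hence iK: "i \<in> {1..K}" using tK by auto
    have Si: "S i > 0" using iK unfolding S_def by (intro S_pos[OF vp]) auto
    have "x i * S i \<le> R" using topt[OF iK] by (simp add: R_def)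
    hence "x i \<le> R / S i" using Si by (simp add: field_simps)
    hence "p i * x i \<le> p i * (R / S i)" using pp[OF iK] by (intro mult_left_mono) auto
    thus "p i * x i \<le> R * (p i / S i)" by (simp add: mult.commute)
  qed
  also have "\<dots> = R * (\<Sum>i=1..t-1. p i / S i)" by (simp add: sum_distrib_left)
  also have "\<dots> \<le> R * G"
    using main_bound[OF r K vp t1 tK] Str R0 unfolding G_def S_def
    by (intro mult_left_mono) auto
  finally have LG: "L \<le> R * G" .
  have L0: "L \<ge> 0" unfolding L_def using tK
    by (intro sum_nonneg) (auto intro!: mult_nonneg_nonneg less_imp_le[OF pp] less_imp_le[OF xpos])
  define W where "W = (\<Sum>i=1..K. p i * x i)"
  have split: "{1..K} = {1..t-1} \<union> {t..K}" using t1 tK by auto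
  have "W = L + (\<Sum>i=t..K. p i * x i)"
    unfolding W_def L_def split by (subst sum.union_disjoint) auto
  moreover have "(\<Sum>i=t..K. p i * x i) \<ge> (\<Sum>i=t..K. p i * x t)"
    using t1 by (intro sum_mono mult_left_mono) (auto intro!: xle less_imp_le[OF pp])
  moreover have "(\<Sum>i=t..K. p i * x t) = R" by (simp add: R_def S_def sum_distrib_left mult.commute)
  ultimately have WLR: "W \<ge> L + R" by simp
  have Wp: "W > 0" using WLR L0 R0 by simp
  have "L * (1 + G) \<le> G * W"
  proof -
    have "G * W \<ge> G * (L + R)" using WLR G0 by (intro mult_left_mono) auto
    thus ?thesis using LG by (simp add: algebra_simps)
  qed
  hence "L / W \<le> G / (1 + G)" using Wp G0 by (simp add: field_simps)
  thus ?thesis by (simp add: ELR1_def L_def W_def t_def)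
qed


lemma geomS:
  fixes q :: real
  assumes "1 \<le> i" "i \<le> K"
  shows "(\<Sum>j=i..K. (if j < K then q ^ (j - 1) - q ^ j else q ^ (K - 1))) = q ^ (i - 1)"
  using assms(2,1)
proof (induction i rule: inc_induct)
  case base
  then show ?case by simp
next
  case (step n)
  have "(\<Sum>j=n..K. (if j < K then q ^ (j - 1) - q ^ j else q ^ (K - 1)))
     = (q ^ (n - 1) - q ^ n) + q ^ (Suc n - 1)"
    using step by (simp add: sum.atLeast_Suc_atMost)
  then show ?case by simp
qed

theorem proposition7:
  fixes r :: real and K :: nat
  assumes "r > 1" and "K \<ge> 2"
  shows "gamma_star r K = real (K - 1) * (1 - r powr (- 1 / real (K - 1)))
     \<and> eta r K = gamma_star r K / (1 + gamma_star r K)"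
proof -
  define q where "q = r powr (- 1 / real (K - 1))"
  note qf = qfacts[OF assms, folded q_def]
  define G where "G = real (K - 1) * (1 - q)"
  define p0 where "p0 j = (if j < K then q ^ (j - 1) - q ^ j else q ^ (K - 1))" for j
  have S0: "(\<Sum>j=i..K. p0 j) = q ^ (i - 1)" if "1 \<le> i" "i \<le> K" for i
    unfolding p0_def using geomS[OF that] .
  have qi: "q ^ i = q ^ (i - 1) * q" if "1 \<le> i" for i
    using that by (cases i) auto
  have p0pos: "p0 i > 0" if "i \<in> {1..K}" for i
  proof (cases "i < K")
    case True
    have "q ^ (i - 1) * q < q ^ (i - 1)" using qf by simp
    thus ?thesis using True that qi[of i] by (simp add: p0_def)
  qed (use qf assms in \<open>simp add: p0_def\<close>)
  have vp0: "valid_prob K p0" unfolding valid_prob_def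
    using p0pos S0[of 1] assms by auto
  have p0K: "p0 K = 1 / r" using qf by (simp add: p0_def)
  have ratio: "p0 i / (\<Sum>j=i..K. p0 j) = 1 - q" if "i \<in> {1..K-1}" for i
  proof -
    have "q ^ (i - 1) > 0" using qf by simp
    thus ?thesis using that S0[of i] qi[of i] qf(1) by (auto simp: p0_def field_simps)
  qed
  have gval: "(\<Sum>i=1..K-1. p0 i / (\<Sum>j=i..K. p0 j)) = G"
    using ratio by (simp add: G_def)
  have gub: "v \<le> G" if "v \<in> {(\<Sum>i=1..K-1. p i / (\<Sum>j=i..K. p j)) | p.
      valid_prob K p \<and> p K = 1 / r}" for v
  proof -
    from that obtain p where p: "valid_prob K p" "p K = 1 / r"
      and v: "v = (\<Sum>i=1..K-1. p i / (\<Sum>j=i..K. p j))" by auto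
    have "(\<Sum>j=K..K. p j) \<ge> 1 / r" using p by simp
    from main_bound[OF assms p(1) _ _ this] assms show ?thesis
      unfolding v G_def q_def by simp
  qed
  have gs: "gamma_star r K = G" unfolding gamma_star_def
    by (rule cSup_eq_maximum) (use vp0 p0K gval gub in auto)
  define x0 where "x0 i = (1 / q) ^ (i - 1)" for i
  have q1: "1 < 1 / q" using qf by simp
  have vv0: "valid_vals r K x0" unfolding valid_vals_def
  proof (intro conjI ballI impI)
    show "0 < x0 1" by (simp add: x0_def)
  next
    fix i j assume "i \<in> {1..K}" "j \<in> {1..K}" "i < j"
    thus "x0 i < x0 j" unfolding x0_def using q1 by (intro power_strict_increasing) auto
  next
    have "x0 K = 1 / q ^ (K - 1)" by (simp add: x0_def power_one_over)
    thus "x0 K \<le> r * x0 1" using qf by (simp add: x0_def)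
  qed
  have rev1: "rev_obj K x0 p0 k = 1" if "k \<in> {1..K}" for k
  proof -
    have "q ^ (k - 1) > 0" using qf by simp
    thus ?thesis using that S0[of k] qf(1) by (simp add: rev_obj_def x0_def power_one_over)
  qed
  have "{i \<in> {1..K}. \<forall>k\<in>{1..K}. rev_obj K x0 p0 k \<le> rev_obj K x0 p0 i} = {1..K}"
    using rev1 by auto
  moreover have "Max {1..K} = K" by (rule Max_eqI) (use assms in auto)
  ultimately have oi: "opt_index K x0 p0 = K" by (simp add: opt_index_def)
  have px: "p0 i * x0 i = p0 i / (\<Sum>j=i..K. p0 j)" if "i \<in> {1..K}" for i
    using that S0[of i] qf(1) by (simp add: x0_def power_one_over)
  have num: "(\<Sum>i=1..K-1. p0 i * x0 i) = G"
  proof -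
    have "(\<Sum>i=1..K-1. p0 i * x0 i) = (\<Sum>i=1..K-1. p0 i / (\<Sum>j=i..K. p0 j))"
      using px by (intro sum.cong) auto
    thus ?thesis using gval by simp
  qed
  have lastt: "p0 K * x0 K = 1"
    using px[of K] assms by (simp add: p0K)
  have "(\<Sum>i=1..K. p0 i * x0 i) = (\<Sum>i=1..Suc (K-1). p0 i * x0 i)" using assms by simp
  also have "\<dots> = (\<Sum>i=1..K-1. p0 i * x0 i) + p0 (Suc (K-1)) * x0 (Suc (K-1))"
    by (rule sum.cl_ivl_Suc[THEN trans]) simp
  also have "\<dots> = G + 1" using num lastt assms by simp
  finally have den: "(\<Sum>i=1..K. p0 i * x0 i) = G + 1" .
  have elr0: "ELR1 K x0 p0 = G / (1 + G)"
    unfolding ELR1_def oi num den by (simp add: add.commute)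
  have eub: "v \<le> G / (1 + G)" if "v \<in> {ELR1 K x p | x p. valid_vals r K x \<and> valid_prob K p}" for v
    using that eta_ub[OF assms] by (auto simp: G_def q_def)
  have es: "eta r K = G / (1 + G)" unfolding eta_def
    by (rule cSup_eq_maximum) (use vv0 vp0 elr0 eub in \<open>force+\<close>)
  show ?thesis using gs es by (simp add: G_def q_def)
qed

end
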